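(* Let $M$ be a commutative von Neumann algebra with a faithful normal finite trace $\tau$, let $\Lambda$ be a quadratic family of Young functions, and let $\delta:L^{\Lambda}(M,\tau)\to L^{\Lambda}(M,\tau)$ be a nonzero additive derivation. Then there exists a sequence $(a_n)_{n\ge1}$ in $M$ with $|a_n|\le\mathbf 1$ for all $n$ such that $|\delta(a_n)|\ge n\,z_\delta$ for all $n\in\mathbb N$.
   Context: Notation for generalized Arens algebras: for a von Neumann algebra $N$ with faithful normal trace $\tau$, $S(N,\tau)$ is the *-algebra of $\tau$-measurable operators affiliated with $N$. A Young function is $\phi(t)=\int_0^t\varphi(s)ds$ with $\varphi\ge0$ right continuous, nondecreasing, $\varphi(0)=0$, $\varphi(s)>0$ for $s>0$, $\varphi(s)\to\infty$. $L_\phi(N,\tau)=\bigcup_n n\{x\in S(N,\tau):\tau(\phi(|x|))\le1\}$. $\phi_1\prec\phi_2$ means $\phi_1(t)\le\phi_2(ct)$ for $t\ge T$, some $c,T\ge 0$. A family $\Lambda$ is quadratic if any two members are $\prec$ some member and for each $\phi\in\Lambda$ there are $\psi\in\Lambda$, $c>0,T\ge0$ with $\phi(t^2)\le\psi(ct)$ for $t\ge T$. $L^\Lambda(N,\tau)=\bigcap_{\phi\in\Lambda}L_\phi(N,\tau)$. An additive derivation is an additive map $\delta$ with $\delta(xy)=\delta(x)y+x\delta(y)$. For an additive derivation $\delta$ on $L^\Lambda(M,\tau)$ ($M$ commutative), its support is $z_\delta=\inf\{z\in P(M): z\delta=\delta\}$, where $P(M)$ is the projection lattice and $(z\delta)(x)=z\delta(x)$.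 Inequalities are in the order of self-adjoint elements of $S(M,\tau)$. *)

theory Defs
  imports "HOL-Analysis.Analysis"
begin

text \<open>A commutative von Neumann algebra M with faithful normal finite trace is modelled
  as L-infinity of a finite measure space (the trace being integration).  Elements of
  S(M,tau) = L0 are represented by measurable complex functions, identified up to a.e.
  equality.\<close>

definition young_function :: "(real \<Rightarrow> real) \<Rightarrow> bool" where
  "young_function \<phi> \<longleftrightarrow>
     (\<exists>\<phi>'. (\<forall>s\<ge>0. \<phi>' s \<ge> 0) \<and> (\<forall>s\<ge>0. continuous (at_right s) \<phi>')
        \<and> mono_on {0..} \<phi>' \<and> \<phi>' 0 = 0 \<and> (\<forall>s>0. \<phi>' s > 0)
        \<and> filterlim \<phi>' at_top at_top
        \<and> (\<forall>t\<ge>0. \<phi> t = integral {0..t} \<phi>'))"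

definition young_prec :: "(real \<Rightarrow> real) \<Rightarrow> (real \<Rightarrow> real) \<Rightarrow> bool" where
  "young_prec \<phi>1 \<phi>2 \<longleftrightarrow> (\<exists>c\<ge>0. \<exists>T\<ge>0. \<forall>t\<ge>T. \<phi>1 t \<le> \<phi>2 (c * t))"

definition quadratic_family :: "(real \<Rightarrow> real) set \<Rightarrow> bool" where
  "quadratic_family \<Lambda> \<longleftrightarrow>
     (\<forall>\<phi>\<in>\<Lambda>. young_function \<phi>)
   \<and> (\<forall>\<phi>1\<in>\<Lambda>. \<forall>\<phi>2\<in>\<Lambda>. \<exists>\<phi>\<in>\<Lambda>. young_prec \<phi>1 \<phi> \<and> young_prec \<phi>2 \<phi>)
   \<and> (\<forall>\<phi>\<in>\<Lambda>. \<exists>\<psi>\<in>\<Lambda>. \<exists>c>0. \<exists>T\<ge>0. \<forall>t\<ge>T. \<phi> (t\<^sup>2) \<le> \<psi> (c * t))"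

definition orlicz :: "'a measure \<Rightarrow> (real \<Rightarrow> real) \<Rightarrow> ('a \<Rightarrow> complex) set" where
  "orlicz M \<phi> = {x \<in> borel_measurable M.
     \<exists>n::nat. n > 0 \<and> (\<integral>\<^sup>+ \<omega>. ennreal (\<phi> (cmod (x \<omega>) / real n)) \<partial>M) \<le> 1}"

definition gen_arens :: "'a measure \<Rightarrow> (real \<Rightarrow> real) set \<Rightarrow> ('a \<Rightarrow> complex) set" where
  "gen_arens M \<Lambda> = {x \<in> borel_measurable M. \<forall>\<phi>\<in>\<Lambda>. x \<in> orlicz M \<phi>}"

text \<open>Additive derivation on L^Lambda, as a map on representatives compatible with a.e. equality.\<close>
definition additive_derivation ::
  "'a measure \<Rightarrow> ('a \<Rightarrow> complex) set \<Rightarrow> (('a \<Rightarrow> complex) \<Rightarrow> ('a \<Rightarrow> complex)) \<Rightarrow> bool" where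
  "additive_derivation M L \<delta> \<longleftrightarrow>
     (\<forall>x\<in>L. \<delta> x \<in> L)
   \<and> (\<forall>x\<in>L. \<forall>y\<in>L. (AE \<omega> in M. x \<omega> = y \<omega>) \<longrightarrow> (AE \<omega> in M. \<delta> x \<omega> = \<delta> y \<omega>))
   \<and> (\<forall>x\<in>L. \<forall>y\<in>L. AE \<omega> in M. \<delta> (\<lambda>\<omega>. x \<omega> + y \<omega>) \<omega> = \<delta> x \<omega> + \<delta> y \<omega>)
   \<and> (\<forall>x\<in>L. \<forall>y\<in>L. AE \<omega> in M. \<delta> (\<lambda>\<omega>. x \<omega> * y \<omega>) \<omega> = \<delta> x \<omega> * y \<omega> + x \<omega> * \<delta> y \<omega>)"

text \<open>Projections of M = indicators of measurable sets (mod null sets).  The projections z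
  with z delta = delta:\<close>
definition fixing_projs ::
  "'a measure \<Rightarrow> ('a \<Rightarrow> complex) set \<Rightarrow> (('a \<Rightarrow> complex) \<Rightarrow> ('a \<Rightarrow> complex)) \<Rightarrow> 'a set set" where
  "fixing_projs M L \<delta> = {E \<in> sets M. \<forall>x\<in>L. AE \<omega> in M. indicator E \<omega> * \<delta> x \<omega> = \<delta> x \<omega>}"

definition is_proj_inf :: "'a measure \<Rightarrow> 'a set set \<Rightarrow> 'a set \<Rightarrow> bool" where
  "is_proj_inf M Z E \<longleftrightarrow> E \<in> sets M
     \<and> (\<forall>F\<in>Z. AE \<omega> in M. \<omega> \<in> E \<longrightarrow> \<omega> \<in> F)
     \<and> (\<forall>G\<in>sets M. (\<forall>F\<in>Z. AE \<omega> in M. \<omega> \<in> G \<longrightarrow> \<omega> \<in> F) \<longrightarrow> (AE \<omega> in M. \<omega> \<in> G \<longrightarrow> \<omega> \<in> E))"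

end

theory Submission
  imports Defs
begin

lemma young_small:
  assumes "young_function \<phi>"
  obtains K where "K \<ge> 0" "\<And>t. 0 \<le> t \<Longrightarrow> t \<le> 1 \<Longrightarrow> 0 \<le> \<phi> t \<and> \<phi> t \<le> t * K"
proof -
  obtain p where p: "\<forall>s\<ge>0. p s \<ge> 0" "mono_on {0..} p" "\<forall>t\<ge>0. \<phi> t = integral {0..t} p"
    using assms unfolding young_function_def by blast
  have "0 \<le> p 1" using p by auto
  moreover have "0 \<le> \<phi> t \<and> \<phi> t \<le> t * p 1" if "0 \<le> t" "t \<le> 1" for t
  proof (cases "p integrable_on {0..t}")
    case True
    have "integral {0..t} p \<le> integral {0..t} (\<lambda>_. p 1)"
      using True that p(2) by (intro integral_le) (auto simp: mono_on_def)
    moreover have "0 \<le> integral {0..t} p" using True p(1) by (intro integral_nonneg) auto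
    ultimately show ?thesis using p(3) that by auto
  next
    case False
    then have "integral {0..t} p = 0" by (rule not_integrable_integral)
    then show ?thesis using p(3) that \<open>0 \<le> p 1\<close> by auto
  qed
  ultimately show ?thesis using that by blast
qed

locale dctx =
  fixes M :: "'a measure" and \<Lambda> :: "(real \<Rightarrow> real) set"
    and \<delta> :: "('a \<Rightarrow> complex) \<Rightarrow> ('a \<Rightarrow> complex)"
  assumes fm: "finite_measure M"
    and qf: "quadratic_family \<Lambda>"
    and ad: "additive_derivation M (gen_arens M \<Lambda>) \<delta>"
begin

abbreviation "L \<equiv> gen_arens M \<Lambda>"

definition bdd :: "('a \<Rightarrow> complex) \<Rightarrow> bool" where
  "bdd x \<longleftrightarrow> x \<in> borel_measurable M \<and> (\<exists>C. \<forall>\<omega>\<in>space M. cmod (x \<omega>) \<le> C)"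

lemma bdd_L: assumes "bdd x" shows "x \<in> L"
proof -
  obtain C0 where xm: "x \<in> borel_measurable M" and C0: "\<forall>\<omega>\<in>space M. cmod (x \<omega>) \<le> C0"
    using assms bdd_def by auto
  define C where "C = \<bar>C0\<bar>"
  have C: "\<forall>\<omega>\<in>space M. cmod (x \<omega>) \<le> C" "C \<ge> 0" using C0 unfolding C_def by force+
  have "x \<in> orlicz M \<phi>" if "\<phi> \<in> \<Lambda>" for \<phi>
  proof -
    have "young_function \<phi>" using qf that unfolding quadratic_family_def by auto
    then obtain K where K: "K \<ge> 0" "\<And>t. 0 \<le> t \<Longrightarrow> t \<le> 1 \<Longrightarrow> 0 \<le> \<phi> t \<and> \<phi> t \<le> t * K"
      using young_small by blast
    define m where "m = measure M (space M)"
    have m: "m \<ge> 0" unfolding m_def by simp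
    define n :: nat where "n = nat \<lceil>C + C * K * m\<rceil> + 1"
    have n0: "n > 0" unfolding n_def by simp
    have CKm: "0 \<le> C * K * m" using C(2) K(1) m by simp
    have nC: "C \<le> real n" "C * K * m \<le> real n" unfolding n_def using C(2) CKm
      by (simp_all add: of_nat_nat) (smt (verit) le_of_int_ceiling)+
    have b: "ennreal (\<phi> (cmod (x \<omega>) / real n)) \<le> ennreal (C / real n * K)" if "\<omega> \<in> space M" for \<omega>
    proof -
      have t0: "0 \<le> cmod (x \<omega>) / real n" by simp
      have t1: "cmod (x \<omega>) / real n \<le> C / real n" using C that n0 by (simp add: divide_right_mono)
      have "C / real n \<le> 1" using nC n0 by simp
      with t1 have "cmod (x \<omega>) / real n \<le> 1" by linarith
      with K(2)[OF t0] have "\<phi> (cmod (x \<omega>) / real n) \<le> cmod (x \<omega>) / real n * K" by auto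
      also have "\<dots> \<le> C / real n * K" by (rule mult_right_mono[OF t1 K(1)])
      finally show ?thesis by (simp add: ennreal_leI)
    qed
    have "(\<integral>\<^sup>+ \<omega>. ennreal (\<phi> (cmod (x \<omega>) / real n)) \<partial>M) \<le> (\<integral>\<^sup>+ \<omega>. ennreal (C / real n * K) \<partial>M)"
      using b by (intro nn_integral_mono) auto
    also have "\<dots> = ennreal (C / real n * K) * ennreal m"
      using finite_measure.emeasure_eq_measure[OF fm] by (simp add: m_def)
    also have "\<dots> = ennreal (C / real n * K * m)" using C(2) K(1) m by (simp add: ennreal_mult[symmetric])
    also have "\<dots> \<le> 1"
    proof -
      have "C / real n * K * m = (C * K * m) / real n" by simp
      also have "\<dots> \<le> 1" using nC n0 by simp
      finally show ?thesis by simp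
    qed
    finally show ?thesis unfolding orlicz_def using xm n0 by auto
  qed
  then show ?thesis unfolding gen_arens_def using xm by auto
qed

lemma Lmeas: "x \<in> L \<Longrightarrow> x \<in> borel_measurable M"
  unfolding gen_arens_def by auto

lemma dL: "x \<in> L \<Longrightarrow> \<delta> x \<in> L"
  using ad unfolding additive_derivation_def by auto

lemma dmeas: "x \<in> L \<Longrightarrow> \<delta> x \<in> borel_measurable M"
  using dL Lmeas by blast

lemma dadd: "x \<in> L \<Longrightarrow> y \<in> L \<Longrightarrow> AE \<omega> in M. \<delta> (\<lambda>\<omega>. x \<omega> + y \<omega>) \<omega> = \<delta> x \<omega> + \<delta> y \<omega>"
  using ad unfolding additive_derivation_def by auto

lemma dmul: "x \<in> L \<Longrightarrow> y \<in> L \<Longrightarrow> AE \<omega> in M. \<delta> (\<lambda>\<omega>. x \<omega> * y \<omega>) \<omega> = \<delta> x \<omega> * y \<omega> + x \<omega> * \<delta> y \<omega>"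
  using ad unfolding additive_derivation_def by auto

lemma bddI: "x \<in> borel_measurable M \<Longrightarrow> (\<And>\<omega>. \<omega> \<in> space M \<Longrightarrow> cmod (x \<omega>) \<le> C) \<Longrightarrow> bdd x"
  unfolding bdd_def by auto

lemma bdd_const: "bdd (\<lambda>_. c)"
  by (rule bddI[where C="cmod c"]) auto

lemma bdd_add: assumes "bdd x" "bdd y" shows "bdd (\<lambda>\<omega>. x \<omega> + y \<omega>)"
proof -
  obtain C D where "\<forall>\<omega>\<in>space M. cmod (x \<omega>) \<le> C" "\<forall>\<omega>\<in>space M. cmod (y \<omega>) \<le> D"
    "x \<in> borel_measurable M" "y \<in> borel_measurable M" using assms bdd_def by auto
  then show ?thesis by (intro bddI[where C="C+D"]) (auto intro!: order.trans[OF norm_triangle_ineq] add_mono)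
qed

lemma bdd_mul: assumes "bdd x" "bdd y" shows "bdd (\<lambda>\<omega>. x \<omega> * y \<omega>)"
proof -
  obtain C D where C: "\<forall>\<omega>\<in>space M. cmod (x \<omega>) \<le> C" "\<forall>\<omega>\<in>space M. cmod (y \<omega>) \<le> D"
    "x \<in> borel_measurable M" "y \<in> borel_measurable M" using assms bdd_def by auto
  show ?thesis
  proof (rule bddI[where C="C*D"])
    fix \<omega> assume "\<omega> \<in> space M"
    then show "cmod (x \<omega> * y \<omega>) \<le> C * D"
      using C by (simp add: norm_mult mult_mono')
  qed (use C in auto)
qed

lemma bdd_ind: "D \<in> sets M \<Longrightarrow> bdd (indicator D :: 'a \<Rightarrow> complex)"
  by (rule bddI[where C=1]) (auto simp: indicator_def)

lemma bdd_neg: "bdd x \<Longrightarrow> bdd (\<lambda>\<omega>. - x \<omega>)"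
  unfolding bdd_def by auto

lemma d_cong: "x = y \<Longrightarrow> \<delta> x = \<delta> y" by simp

lemma d0: "AE \<omega> in M. \<delta> (\<lambda>_. 0) \<omega> = 0"
proof -
  have z: "(\<lambda>_. 0::complex) \<in> L" by (rule bdd_L[OF bdd_const])
  have "AE \<omega> in M. \<delta> (\<lambda>\<omega>. (\<lambda>_. 0) \<omega> + (\<lambda>_. 0) \<omega>) \<omega> = \<delta> (\<lambda>_. 0) \<omega> + \<delta> (\<lambda>_. 0) \<omega>"
    by (rule dadd[OF z z])
  then show ?thesis by simp
qed

lemma d_idem: assumes "bdd p" "\<And>\<omega>. p \<omega> = 0 \<or> p \<omega> = 1"
  shows "AE \<omega> in M. \<delta> p \<omega> = 0"
proof -
  have pL: "p \<in> L" using bdd_L assms by blast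
  have e: "(\<lambda>\<omega>. p \<omega> * p \<omega>) = p" proof
    fix \<omega> show "p \<omega> * p \<omega> = p \<omega>" using assms(2)[of \<omega>] by auto
  qed
  from dmul[OF pL pL] show ?thesis
  proof eventually_elim
    case (elim \<omega>)
    then have "\<delta> p \<omega> = \<delta> p \<omega> * p \<omega> + p \<omega> * \<delta> p \<omega>" using e by simp
    then show ?case using assms(2)[of \<omega>] by auto
  qed
qed

lemma d_local: assumes "D \<in> sets M" "y \<in> L" "(\<lambda>\<omega>. indicator D \<omega> * y \<omega>) \<in> L"
  shows "AE \<omega> in M. \<delta> (\<lambda>\<omega>. indicator D \<omega> * y \<omega>) \<omega> = indicator D \<omega> * \<delta> y \<omega>"
proof -
  have iL: "(indicator D :: 'a \<Rightarrow> complex) \<in> L" using bdd_L bdd_ind assms by blast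
  have "AE \<omega> in M. \<delta> (indicator D :: 'a \<Rightarrow> complex) \<omega> = 0"
    by (rule d_idem[OF bdd_ind[OF assms(1)]]) (auto simp: indicator_def)
  with dmul[OF iL assms(2)] show ?thesis by eventually_elim simp
qed

lemma d_neg: assumes "x \<in> L" "(\<lambda>\<omega>. - x \<omega>) \<in> L"
  shows "AE \<omega> in M. \<delta> (\<lambda>\<omega>. - x \<omega>) \<omega> = - \<delta> x \<omega>"
proof -
  have e: "(\<lambda>\<omega>. x \<omega> + (\<lambda>\<omega>. - x \<omega>) \<omega>) = (\<lambda>_. 0)" by auto
  from dadd[OF assms] d0 show ?thesis unfolding e
    by eventually_elim (metis add.commute add_eq_0_iff)
qed

lemma d_nat: assumes "bdd x"
  shows "AE \<omega> in M. \<delta> (\<lambda>\<omega>. of_nat k * x \<omega>) \<omega> = of_nat k * \<delta> x \<omega>"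
proof (induction k)
  case 0
  then show ?case using d0 by simp
next
  case (Suc k)
  have b: "bdd (\<lambda>\<omega>. of_nat k * x \<omega>)" by (rule bdd_mul[OF bdd_const assms])
  have e: "(\<lambda>\<omega>. of_nat (Suc k) * x \<omega>) = (\<lambda>\<omega>. (\<lambda>\<omega>. of_nat k * x \<omega>) \<omega> + x \<omega>)"
    by (auto simp: algebra_simps)
  from dadd[OF bdd_L[OF b] bdd_L[OF assms]] Suc show ?case
    unfolding e by eventually_elim (simp add: algebra_simps)
qed

definition "Z = {c. AE \<omega> in M. \<delta> (\<lambda>_. c) \<omega> = 0}"

lemma Z1: "1 \<in> Z"
  unfolding Z_def using d_idem[OF bdd_const, of 1] by auto

lemma Zadd: assumes "c \<in> Z" "d \<in> Z" shows "c + d \<in> Z"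
proof -
  from dadd[OF bdd_L[OF bdd_const] bdd_L[OF bdd_const], of c d] assms[unfolded Z_def mem_Collect_eq]
  have "AE \<omega> in M. \<delta> (\<lambda>_. c + d) \<omega> = 0" unfolding Z_def by eventually_elim simp
  then show ?thesis unfolding Z_def by simp
qed

lemma Zmul: assumes "c \<in> Z" "d \<in> Z" shows "c * d \<in> Z"
proof -
  from dmul[OF bdd_L[OF bdd_const] bdd_L[OF bdd_const], of c d] assms[unfolded Z_def mem_Collect_eq]
  have "AE \<omega> in M. \<delta> (\<lambda>_. c * d) \<omega> = 0" unfolding Z_def by eventually_elim simp
  then show ?thesis unfolding Z_def by simp
qed

lemma Zneg: assumes "c \<in> Z" shows "- c \<in> Z"
proof -
  from d_neg[OF bdd_L[OF bdd_const] bdd_L[OF bdd_const], of c] assms[unfolded Z_def mem_Collect_eq]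
  have "AE \<omega> in M. \<delta> (\<lambda>_. - c) \<omega> = 0" unfolding Z_def by eventually_elim simp
  then show ?thesis unfolding Z_def by simp
qed

lemma Zdiv: assumes "c \<in> Z" "m > 0" shows "c / of_nat m \<in> Z"
proof -
  have e: "(\<lambda>\<omega>. of_nat m * (\<lambda>_. c / of_nat m) \<omega>) = (\<lambda>_. c)" using assms(2) by auto
  have A: "AE \<omega> in M. \<delta> (\<lambda>_. c) \<omega> = of_nat m * \<delta> (\<lambda>_. c / of_nat m) \<omega>"
    using d_nat[OF bdd_const, of m "c / of_nat m"] unfolding e .
  from A assms(1)[unfolded Z_def mem_Collect_eq]
  have "AE \<omega> in M. \<delta> (\<lambda>_. c / of_nat m) \<omega> = 0"
    by eventually_elim (use assms(2) in simp)
  then show ?thesis unfolding Z_def by simp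
qed

lemma Znat: "of_nat j \<in> Z"
proof (induction j)
  case 0
  then show ?case using d0 unfolding Z_def by simp
next
  case (Suc j)
  then show ?case using Zadd[OF Suc Z1] by (simp add: add.commute)
qed

lemma Zint: "of_int j \<in> Z"
proof (cases "j \<ge> 0")
  case True
  then show ?thesis using Znat[of "nat j"] by simp
next
  case False
  then show ?thesis using Zneg[OF Znat[of "nat (- j)"]] by simp
qed

lemma Zi: "\<i> \<in> Z"
proof -
  have m1: "(\<i> * \<i>) \<in> Z" using Zneg[OF Z1] by simp
  from dmul[OF bdd_L[OF bdd_const] bdd_L[OF bdd_const], of \<i> \<i>] m1[unfolded Z_def mem_Collect_eq]
  have "AE \<omega> in M. \<delta> (\<lambda>_. \<i>) \<omega> = 0"
  proof eventually_elim
    case (elim \<omega>)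
    then have "2 * \<i> * \<delta> (\<lambda>_. \<i>) \<omega> = 0" by (simp add: algebra_simps)
    then show "\<delta> (\<lambda>_. \<i>) \<omega> = 0" by simp
  qed
  then show ?thesis unfolding Z_def by simp
qed

lemma Zgauss: "m > 0 \<Longrightarrow> (of_int j + \<i> * of_int l) / of_nat m \<in> Z"
  by (intro Zdiv Zadd Zmul Zint Zi)

lemma d_step:
  fixes g :: "'a \<Rightarrow> 'i::countable" and c :: "'i \<Rightarrow> complex"
  assumes s: "bdd s" and g: "\<And>i. {\<omega>\<in>space M. g \<omega> = i} \<in> sets M"
    and c: "\<And>i. c i \<in> Z" and sc: "\<And>\<omega>. \<omega> \<in> space M \<Longrightarrow> s \<omega> = c (g \<omega>)"
  shows "AE \<omega> in M. \<delta> s \<omega> = 0"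
proof -
  have "AE \<omega> in M. indicator {\<omega>\<in>space M. g \<omega> = i} \<omega> * \<delta> s \<omega> = 0" for i
  proof -
    let ?D = "{\<omega>\<in>space M. g \<omega> = i}"
    have e: "(\<lambda>\<omega>. indicator ?D \<omega> * s \<omega>) = (\<lambda>\<omega>. indicator ?D \<omega> * (\<lambda>_. c i) \<omega>)"
      using sc by (auto simp: indicator_def)
    have A: "AE \<omega> in M. \<delta> (\<lambda>\<omega>. indicator ?D \<omega> * s \<omega>) \<omega> = indicator ?D \<omega> * \<delta> s \<omega>"
      by (rule d_local[OF g bdd_L[OF s] bdd_L[OF bdd_mul[OF bdd_ind[OF g] s]]])
    have B: "AE \<omega> in M. \<delta> (\<lambda>\<omega>. indicator ?D \<omega> * s \<omega>) \<omega> = indicator ?D \<omega> * \<delta> (\<lambda>_. c i) \<omega>"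
      unfolding e
      by (rule d_local[OF g bdd_L[OF bdd_const] bdd_L[OF bdd_mul[OF bdd_ind[OF g] bdd_const]]])
    from A B c[of i, unfolded Z_def mem_Collect_eq] show ?thesis by eventually_elim simp
  qed
  then have "AE \<omega> in M. \<forall>i. indicator {\<omega>\<in>space M. g \<omega> = i} \<omega> * \<delta> s \<omega> = 0"
    by (intro AE_all_countable[THEN iffD2] allI)
  with AE_space show ?thesis
  proof eventually_elim
    case (elim \<omega>)
    then show ?case by (auto dest: spec[of _ "g \<omega>"])
  qed
qed

lemma approx:
  fixes a :: "'a \<Rightarrow> complex" and m :: nat
  assumes a: "bdd a" and m: "m > 0"
  defines "s \<equiv> \<lambda>\<omega>. (of_int \<lfloor>real m * Re (a \<omega>)\<rfloor> + \<i> * of_int \<lfloor>real m * Im (a \<omega>)\<rfloor>) / of_nat m"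
  shows "bdd s" "AE \<omega> in M. \<delta> s \<omega> = 0" "\<And>\<omega>. cmod (a \<omega> - s \<omega>) \<le> 2 / real m"
proof -
  have am[measurable]: "a \<in> borel_measurable M" using a bdd_def by auto
  show cl: "cmod (a \<omega> - s \<omega>) \<le> 2 / real m" for \<omega>
  proof -
    have r: "\<bar>Re (a \<omega> - s \<omega>)\<bar> \<le> 1 / real m"
    proof -
      have "Re (a \<omega> - s \<omega>) = (real m * Re (a \<omega>) - of_int \<lfloor>real m * Re (a \<omega>)\<rfloor>) / real m"
        using m by (simp add: s_def field_simps)
      moreover have "0 \<le> real m * Re (a \<omega>) - of_int \<lfloor>real m * Re (a \<omega>)\<rfloor>"
        "real m * Re (a \<omega>) - of_int \<lfloor>real m * Re (a \<omega>)\<rfloor> \<le> 1" by linarith+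
      ultimately show ?thesis using m by (simp add: divide_right_mono)
    qed
    have i: "\<bar>Im (a \<omega> - s \<omega>)\<bar> \<le> 1 / real m"
    proof -
      have "Im (a \<omega> - s \<omega>) = (real m * Im (a \<omega>) - of_int \<lfloor>real m * Im (a \<omega>)\<rfloor>) / real m"
        using m by (simp add: s_def field_simps)
      moreover have "0 \<le> real m * Im (a \<omega>) - of_int \<lfloor>real m * Im (a \<omega>)\<rfloor>"
        "real m * Im (a \<omega>) - of_int \<lfloor>real m * Im (a \<omega>)\<rfloor> \<le> 1" by linarith+
      ultimately show ?thesis using m by (simp add: divide_right_mono)
    qed
    show ?thesis using cmod_le[of "a \<omega> - s \<omega>"] r i by simp
  qed
  have smeas: "s \<in> borel_measurable M" unfolding s_def by measurable
  obtain C where C: "\<forall>\<omega>\<in>space M. cmod (a \<omega>) \<le> C" using a bdd_def by auto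
  show sb: "bdd s"
  proof (rule bddI[OF smeas, where C="C + 2 / real m"])
    fix \<omega> assume "\<omega> \<in> space M"
    moreover have "cmod (s \<omega>) \<le> cmod (a \<omega>) + cmod (a \<omega> - s \<omega>)"
      using norm_triangle_ineq4[of "a \<omega>" "a \<omega> - s \<omega>"] by simp
    ultimately show "cmod (s \<omega>) \<le> C + 2 / real m" using C cl[of \<omega>] by fastforce
  qed
  show "AE \<omega> in M. \<delta> s \<omega> = 0"
  proof (rule d_step[OF sb, where g="\<lambda>\<omega>. (\<lfloor>real m * Re (a \<omega>)\<rfloor>, \<lfloor>real m * Im (a \<omega>)\<rfloor>)"
        and c="\<lambda>(j,l). (of_int j + \<i> * of_int l) / of_nat m"])
    fix i :: "int \<times> int"
    show "{\<omega> \<in> space M. (\<lfloor>real m * Re (a \<omega>)\<rfloor>, \<lfloor>real m * Im (a \<omega>)\<rfloor>) = i} \<in> sets M"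
      by (cases i) (simp, measurable)
    show "(case i of (j, l) \<Rightarrow> (of_int j + \<i> * of_int l) / of_nat m) \<in> Z"
      using Zgauss[OF m] by (cases i) simp
  qed (simp add: s_def)
qed

lemma small_to_zero: fixes r n :: real assumes "\<And>k::nat. r \<le> n / real (Suc k)" "r \<ge> 0"
  shows "r = 0"
proof (rule ccontr)
  assume "r \<noteq> 0" then have r: "r > 0" using assms(2) by simp
  obtain k :: nat where k: "n / r < real k" using reals_Archimedean2 by blast
  have "r \<le> n / real (Suc k)" by (rule assms(1))
  then have "real (Suc k) * r \<le> n" by (simp add: field_simps)
  moreover have "n < real k * r" using k r by (simp add: field_simps)
  moreover have "0 \<le> real k * r" using r by simp
  moreover have "real (Suc k) * r = r + (real k * r)" by (simp add: algebra_simps)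
  ultimately show False using r by linarith
qed

lemma killB:
  assumes B: "B \<in> sets M"
    and H: "\<And>a. bdd a \<Longrightarrow> (\<forall>\<omega>\<in>space M. cmod (a \<omega>) \<le> 1) \<Longrightarrow> AE \<omega> in M. \<omega> \<in> B \<longrightarrow> cmod (\<delta> a \<omega>) \<le> real n"
    and x: "x \<in> L"
  shows "AE \<omega> in M. \<omega> \<in> B \<longrightarrow> \<delta> x \<omega> = 0"
proof -
  have small: "AE \<omega> in M. \<omega> \<in> B \<longrightarrow> cmod (\<delta> a \<omega>) \<le> real n / real k"
    if a: "bdd a" and k: "k > 0" and ab: "\<forall>\<omega>\<in>space M. cmod (a \<omega>) \<le> 1 / real k" for a k
  proof -
    have b: "bdd (\<lambda>\<omega>. of_nat k * a \<omega>)" by (rule bdd_mul[OF bdd_const a])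
    have "\<forall>\<omega>\<in>space M. cmod (of_nat k * a \<omega>) \<le> 1"
    proof
      fix \<omega> assume "\<omega> \<in> space M"
      then have "cmod (a \<omega>) \<le> 1 / real k" using ab by auto
      then show "cmod (of_nat k * a \<omega>) \<le> 1" using k by (simp add: norm_mult field_simps)
    qed
    from H[OF b this] d_nat[OF a, of k] show ?thesis
    proof eventually_elim
      case (elim \<omega>)
      then show ?case using k by (auto simp: norm_mult field_simps)
    qed
  qed
  have bz: "AE \<omega> in M. \<omega> \<in> B \<longrightarrow> \<delta> a \<omega> = 0" if a: "bdd a" for a
  proof -
    have "AE \<omega> in M. \<omega> \<in> B \<longrightarrow> cmod (\<delta> a \<omega>) \<le> real n / real (Suc k)" for k
    proof -
      define m where "m = 2 * Suc k"
      have m: "m > 0" unfolding m_def by simp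
      define s where "s = (\<lambda>\<omega>. (of_int \<lfloor>real m * Re (a \<omega>)\<rfloor> + \<i> * of_int \<lfloor>real m * Im (a \<omega>)\<rfloor>) / of_nat m :: complex)"
      have sb: "bdd s" and s0: "AE \<omega> in M. \<delta> s \<omega> = 0" and sc: "\<And>\<omega>. cmod (a \<omega> - s \<omega>) \<le> 2 / real m"
        using approx[OF a m] unfolding s_def by auto
      have db: "bdd (\<lambda>\<omega>. a \<omega> - s \<omega>)"
      proof -
        have "(\<lambda>\<omega>. a \<omega> - s \<omega>) \<in> borel_measurable M" using a sb bdd_def by auto
        then show ?thesis using sc by (intro bddI) auto
      qed
      have e: "(\<lambda>\<omega>. s \<omega> + (a \<omega> - s \<omega>)) = a" by auto
      have A: "AE \<omega> in M. \<delta> a \<omega> = \<delta> s \<omega> + \<delta> (\<lambda>\<omega>. a \<omega> - s \<omega>) \<omega>"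
        using dadd[OF bdd_L[OF sb] bdd_L[OF db]] unfolding e .
      have "\<forall>\<omega>\<in>space M. cmod (a \<omega> - s \<omega>) \<le> 1 / real (Suc k)"
      proof -
        have "2 / real m = 1 / real (Suc k)" unfolding m_def by (simp add: divide_simps)
        then show ?thesis using sc by metis
      qed
      from small[OF db zero_less_Suc this] A s0 show ?thesis
        by eventually_elim (simp add: m_def)
    qed
    then have "AE \<omega> in M. \<forall>k. \<omega> \<in> B \<longrightarrow> cmod (\<delta> a \<omega>) \<le> real n / real (Suc k)"
      by (intro AE_all_countable[THEN iffD2] allI)
    then show ?thesis
    proof eventually_elim
      case (elim \<omega>)
      then show ?case using small_to_zero[of "cmod (\<delta> a \<omega>)" "real n"] by auto
    qed
  qed
  have xm[measurable]: "x \<in> borel_measurable M" using Lmeas x by auto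
  have "AE \<omega> in M. \<omega> \<in> B \<longrightarrow> indicator {\<omega>\<in>space M. cmod (x \<omega>) < real j} \<omega> * \<delta> x \<omega> = 0" for j
  proof -
    let ?E = "{\<omega>\<in>space M. cmod (x \<omega>) < real j}"
    have E: "?E \<in> sets M" by measurable
    have yb: "bdd (\<lambda>\<omega>. indicator ?E \<omega> * x \<omega>)"
    proof (rule bddI[where C="real j"])
      show "(\<lambda>\<omega>. indicator ?E \<omega> * x \<omega>) \<in> borel_measurable M" by measurable
    next
      fix \<omega> show "cmod (indicator ?E \<omega> * x \<omega>) \<le> real j" by (auto simp: indicator_def)
    qed
    from bz[OF yb] d_local[OF E x bdd_L[OF yb]] show ?thesis by eventually_elim auto
  qed
  then have "AE \<omega> in M. \<forall>j. \<omega> \<in> B \<longrightarrow> indicator {\<omega>\<in>space M. cmod (x \<omega>) < real j} \<omega> * \<delta> x \<omega> = 0"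
    by (intro AE_all_countable[THEN iffD2] allI)
  with AE_space show ?thesis
  proof eventually_elim
    case (elim \<omega>)
    obtain j :: nat where "cmod (x \<omega>) < real j" using reals_Archimedean2 by blast
    then show ?case using elim by (auto dest: spec[of _ j])
  qed
qed

definition good :: "nat \<Rightarrow> 'a set \<Rightarrow> bool" where
  "good n E \<longleftrightarrow> E \<in> sets M \<and> (\<exists>a. bdd a \<and> (\<forall>\<omega>\<in>space M. cmod (a \<omega>) \<le> 1)
      \<and> (AE \<omega> in M. \<omega> \<in> E \<longrightarrow> real n \<le> cmod (\<delta> a \<omega>)))"

lemma glue: assumes "\<And>k::nat. good n (E k)" shows "good n (\<Union>k. E k)"
proof -
  have "\<forall>k. \<exists>a. bdd a \<and> (\<forall>\<omega>\<in>space M. cmod (a \<omega>) \<le> 1)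
      \<and> (AE \<omega> in M. \<omega> \<in> E k \<longrightarrow> real n \<le> cmod (\<delta> a \<omega>))"
    using assms unfolding good_def by blast
  from choice[OF this] obtain a where a0: "\<forall>k. bdd (a k) \<and> (\<forall>\<omega>\<in>space M. cmod (a k \<omega>) \<le> 1)
      \<and> (AE \<omega> in M. \<omega> \<in> E k \<longrightarrow> real n \<le> cmod (\<delta> (a k) \<omega>))" by blast
  have a: "\<And>k. bdd (a k)" "\<And>k. \<forall>\<omega>\<in>space M. cmod (a k \<omega>) \<le> 1"
    "\<And>k. AE \<omega> in M. \<omega> \<in> E k \<longrightarrow> real n \<le> cmod (\<delta> (a k) \<omega>)"
    using a0 by blast+
  have Es[measurable]: "E k \<in> sets M" for k using assms good_def by auto
  have am[measurable]: "a k \<in> borel_measurable M" for k using a(1) bdd_def by auto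
  define f where "f \<omega> = (LEAST k. \<omega> \<in> E k)" for \<omega>
  have fm[measurable]: "f \<in> measurable M (count_space UNIV)" unfolding f_def
    by (rule measurable_Least) simp
  define c where "c \<omega> = a (f \<omega>) \<omega>" for \<omega>
  have cm: "c \<in> borel_measurable M" unfolding c_def
    by (rule measurable_compose_countable[OF am fm])
  have cb: "bdd c" using a(2) unfolding c_def by (intro bddI[OF cm[unfolded c_def], where C=1]) auto
  have cb1: "\<forall>\<omega>\<in>space M. cmod (c \<omega>) \<le> 1" using a(2) unfolding c_def by auto
  have loc: "AE \<omega> in M. f \<omega> = k \<longrightarrow> \<delta> c \<omega> = \<delta> (a k) \<omega>" for k
  proof -
    let ?D = "{\<omega>\<in>space M. f \<omega> = k}"
    have D: "?D \<in> sets M" by measurable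
    have e: "(\<lambda>\<omega>. indicator ?D \<omega> * c \<omega>) = (\<lambda>\<omega>. indicator ?D \<omega> * a k \<omega>)"
      by (auto simp: indicator_def c_def)
    have A: "AE \<omega> in M. \<delta> (\<lambda>\<omega>. indicator ?D \<omega> * c \<omega>) \<omega> = indicator ?D \<omega> * \<delta> c \<omega>"
      by (rule d_local[OF D bdd_L[OF cb] bdd_L[OF bdd_mul[OF bdd_ind[OF D] cb]]])
    have B: "AE \<omega> in M. \<delta> (\<lambda>\<omega>. indicator ?D \<omega> * c \<omega>) \<omega> = indicator ?D \<omega> * \<delta> (a k) \<omega>"
      unfolding e by (rule d_local[OF D bdd_L[OF a(1)] bdd_L[OF bdd_mul[OF bdd_ind[OF D] a(1)]]])
    from A B AE_space show ?thesis by eventually_elim (auto simp: indicator_def)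
  qed
  have L1: "AE \<omega> in M. \<forall>k. f \<omega> = k \<longrightarrow> \<delta> c \<omega> = \<delta> (a k) \<omega>"
    unfolding AE_all_countable using loc by blast
  have L2: "AE \<omega> in M. \<forall>k. \<omega> \<in> E k \<longrightarrow> real n \<le> cmod (\<delta> (a k) \<omega>)"
    unfolding AE_all_countable using a(3) by blast
  have "AE \<omega> in M. \<omega> \<in> (\<Union>k. E k) \<longrightarrow> real n \<le> cmod (\<delta> c \<omega>)"
    using L1 L2
  proof eventually_elim
    case (elim \<omega>)
    show ?case
    proof
      assume "\<omega> \<in> (\<Union>k. E k)"
      then obtain k where "\<omega> \<in> E k" by blast
      then have w: "\<omega> \<in> E (f \<omega>)" unfolding f_def by (rule LeastI)
      have "\<delta> c \<omega> = \<delta> (a (f \<omega>)) \<omega>" using spec[OF elim(1), of "f \<omega>"] by blast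
      moreover have "real n \<le> cmod (\<delta> (a (f \<omega>)) \<omega>)" using spec[OF elim(2), of "f \<omega>"] w by blast
      ultimately show "real n \<le> cmod (\<delta> c \<omega>)" by simp
    qed
  qed
  moreover have "(\<Union>k. E k) \<in> sets M" by measurable
  ultimately show ?thesis unfolding good_def using cb cb1 by blast
qed

lemma good_empty: "good n {}"
  unfolding good_def using bdd_const[of 0] by auto

lemma main_n: assumes z: "is_proj_inf M (fixing_projs M L \<delta>) z"
  shows "\<exists>c. bdd c \<and> (\<forall>\<omega>\<in>space M. cmod (c \<omega>) \<le> 1)
      \<and> (AE \<omega> in M. real n * indicator z \<omega> \<le> cmod (\<delta> c \<omega>))"
proof -
  interpret finite_measure M by (rule fm)
  let ?S = "{E. good n E}"
  define \<sigma> where "\<sigma> = (SUP E\<in>?S. measure M E)"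
  have ne: "?S \<noteq> {}" using good_empty by auto
  have ba: "bdd_above (measure M ` ?S)"
    by (rule bdd_aboveI[where M="measure M (space M)"]) (auto simp: good_def intro: bounded_measure)
  have "\<forall>k. \<exists>E. good n E \<and> \<sigma> - 1 / real (Suc k) < measure M E"
  proof
    fix k
    have "\<sigma> - 1 / real (Suc k) < \<sigma>" by simp
    then show "\<exists>E. good n E \<and> \<sigma> - 1 / real (Suc k) < measure M E"
      unfolding \<sigma>_def using less_cSUP_iff[OF ne ba] by auto
  qed
  from choice[OF this] obtain E where E0: "\<forall>k. good n (E k) \<and> \<sigma> - 1 / real (Suc k) < measure M (E k)"
    by blast
  have E: "\<And>k. good n (E k)" "\<And>k. \<sigma> - 1 / real (Suc k) < measure M (E k)"
    using E0 by blast+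
  define U where "U = (\<Union>k. E k)"
  have gU: "good n U" unfolding U_def by (rule glue[OF E(1)])
  have U: "U \<in> sets M" using gU good_def by auto
  have mU: "measure M U \<ge> \<sigma>"
  proof (rule ccontr)
    assume "\<not> \<sigma> \<le> measure M U"
    then obtain k :: nat where k: "1 / real (Suc k) < \<sigma> - measure M U"
      using nat_approx_posE[of "\<sigma> - measure M U"] by auto
    have "E k \<subseteq> U" unfolding U_def by auto
    then have "measure M (E k) \<le> measure M U" using U by (intro finite_measure_mono)
    with E(2)[of k] k show False by linarith
  qed
  define B where "B = space M - U"
  have Bs: "B \<in> sets M" unfolding B_def using U by auto
  have H: "AE \<omega> in M. \<omega> \<in> B \<longrightarrow> cmod (\<delta> a \<omega>) \<le> real n"
    if a: "bdd a" and a1: "\<forall>\<omega>\<in>space M. cmod (a \<omega>) \<le> 1" for a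
  proof -
    have am[measurable]: "\<delta> a \<in> borel_measurable M" using dmeas[OF bdd_L[OF a]] .
    have [measurable]: "U \<in> sets M" by (rule U)
    define F where "F = {\<omega>\<in>space M. \<omega> \<notin> U \<and> real n < cmod (\<delta> a \<omega>)}"
    have Fs: "F \<in> sets M" unfolding F_def by measurable
    have "AE \<omega> in M. \<omega> \<in> F \<longrightarrow> real n \<le> cmod (\<delta> a \<omega>)" by (rule AE_I2) (simp add: F_def)
    then have gF: "good n F" unfolding good_def using Fs a a1 by blast
    have "good n (\<Union>k::nat. if k = 0 then U else F)" by (rule glue) (use gU gF in auto)
    moreover have "(\<Union>k. if k = (0::nat) then U else F) = U \<union> F" by (auto split: if_splits)
    ultimately have "good n (U \<union> F)" by simp
    then have "measure M (U \<union> F) \<le> \<sigma>" unfolding \<sigma>_def by (intro cSUP_upper[OF _ ba]) auto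
    moreover have "measure M (U \<union> F) = measure M U + measure M F"
      using U Fs by (intro finite_measure_Union) (auto simp: F_def)
    ultimately have "measure M F = 0" using mU measure_nonneg[of M F] by linarith
    then have "F \<in> null_sets M" using Fs by (simp add: emeasure_eq_measure null_sets_def)
    from AE_not_in[OF this] AE_space show ?thesis
      by eventually_elim (auto simp: F_def B_def)
  qed
  have fixU: "U \<in> fixing_projs M L \<delta>"
    unfolding fixing_projs_def
  proof (intro CollectI conjI ballI)
    fix x assume x: "x \<in> L"
    have kB: "AE \<omega> in M. \<omega> \<in> B \<longrightarrow> \<delta> x \<omega> = 0"
      by (rule killB[OF Bs _ x]) (rule H; assumption)
    from kB AE_space show "AE \<omega> in M. indicator U \<omega> * \<delta> x \<omega> = \<delta> x \<omega>"
      by eventually_elim (auto simp: B_def indicator_def)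
  qed (rule U)
  have zU: "AE \<omega> in M. \<omega> \<in> z \<longrightarrow> \<omega> \<in> U" using z fixU unfolding is_proj_inf_def by blast
  obtain c where c: "bdd c" "\<forall>\<omega>\<in>space M. cmod (c \<omega>) \<le> 1"
    "AE \<omega> in M. \<omega> \<in> U \<longrightarrow> real n \<le> cmod (\<delta> c \<omega>)" using gU good_def by auto
  from zU c(3) have "AE \<omega> in M. real n * indicator z \<omega> \<le> cmod (\<delta> c \<omega>)"
    by eventually_elim (auto simp: indicator_def)
  then show ?thesis using c by blast
qed

end

theorem lemma3p2:
  fixes M :: "'a measure" and \<Lambda> :: "(real \<Rightarrow> real) set"
    and \<delta> :: "('a \<Rightarrow> complex) \<Rightarrow> ('a \<Rightarrow> complex)" and z :: "'a set"
  assumes "finite_measure M"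
    and "quadratic_family \<Lambda>"
    and "additive_derivation M (gen_arens M \<Lambda>) \<delta>"
    and "\<exists>x\<in>gen_arens M \<Lambda>. \<not> (AE \<omega> in M. \<delta> x \<omega> = 0)"
    and "is_proj_inf M (fixing_projs M (gen_arens M \<Lambda>) \<delta>) z"
  shows "\<exists>a :: nat \<Rightarrow> 'a \<Rightarrow> complex. \<forall>n.
           a n \<in> borel_measurable M \<and> a n \<in> gen_arens M \<Lambda>
         \<and> (AE \<omega> in M. cmod (a n \<omega>) \<le> 1)
         \<and> (AE \<omega> in M. real n * indicator z \<omega> \<le> cmod (\<delta> (a n) \<omega>))"
proof -
  interpret dctx M \<Lambda> \<delta> using assms(1-3) by (rule dctx.intro)
  have "\<forall>n. \<exists>c. bdd c \<and> (\<forall>\<omega>\<in>space M. cmod (c \<omega>) \<le> 1)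
      \<and> (AE \<omega> in M. real n * indicator z \<omega> \<le> cmod (\<delta> c \<omega>))"
    using main_n[OF assms(5)] by blast
  from choice[OF this] obtain a where a: "\<forall>n. bdd (a n) \<and> (\<forall>\<omega>\<in>space M. cmod (a n \<omega>) \<le> 1)
      \<and> (AE \<omega> in M. real n * indicator z \<omega> \<le> cmod (\<delta> (a n) \<omega>))" by blast
  have "a n \<in> borel_measurable M \<and> a n \<in> gen_arens M \<Lambda>
         \<and> (AE \<omega> in M. cmod (a n \<omega>) \<le> 1)
         \<and> (AE \<omega> in M. real n * indicator z \<omega> \<le> cmod (\<delta> (a n) \<omega>))" for n
  proof (intro conjI)
    have b: "bdd (a n)" using a by blast
    then show "a n \<in> borel_measurable M" unfolding bdd_def by blast
    show "a n \<in> gen_arens M \<Lambda>" by (rule bdd_L[OF b])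
    have "\<forall>\<omega>\<in>space M. cmod (a n \<omega>) \<le> 1" using a by blast
    then show "AE \<omega> in M. cmod (a n \<omega>) \<le> 1" by (intro AE_I2) blast
    show "AE \<omega> in M. real n * indicator z \<omega> \<le> cmod (\<delta> (a n) \<omega>)" using a by blast
  qed
  then show ?thesis by blast
qed

end
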